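(* Let $T=(t_{ij})$ be an $\mathbb{N}$-tableau of shape $\lambda$ and let $\widetilde{U}_T=(\widetilde{u}_{ijk})$ be the array defined in the context. Then for all $(i,j,k)$ in its index set: $\widetilde{u}_{i,j,0}=-\mathrm{rect}_T(i,j)$, $\widetilde{u}_{i,j,\min(i,j)}=0$, and for $0<k<\min(i,j)$, \[\widetilde{u}_{ijk}=\max\bigl(\widetilde{u}_{i-1,j,k}+\widetilde{u}_{i,j-1,k-1},\ \widetilde{u}_{i-1,j,k-1}+\widetilde{u}_{i,j-1,k}\bigr)-\widetilde{u}_{i-1,j-1,k-1}.\] That is, $\widetilde{U}_T$ satisfies the tropical octahedron recurrence.
   Context: Partitions are drawn in English notation with matrix coordinates: the box in row $i$ and column $j$ is $(i,j)$. An $\mathbb{N}$-tableau of shape $\lambda$ is an assignment of a nonnegative integer to each box of $\lambda$. For a box $(i,j)$ of $\lambda$, $\mathrm{rect}_T(i,j)=\sum_{k=1}^{i}\sum_{l=1}^{j}t_{kl}$; if $(i,j)$ is not a box of $\lambda$, $\mathrm{rect}_T(i,j)$ is interpreted as $0$. The array $U_T=(u_{ijk})$ is indexed by all $(i,j,k)\in\mathbb{Z}^3$ such that $(i+a,j+b)$ is a box of $\lambda$ for some $a,b\in\{0,1,2\}$ and $0\le k\le\min(i,j)+1$. Its entries are: $u_{i,j,0}=0$ and $u_{i,j,\min(i,j)+1}=0$, and for $0<k<\min(i,j)+1$, \[u_{ijk}=\min(u_{i-1,j,k-1},u_{i,j-1,k-1})+\max(u_{i-1,j,k},u_{i,j-1,k})-u_{i-1,j-1,k-1}+t_{ijk},\]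 where $t_{ij1}=t_{ij}$ if $(i,j)\in\lambda$ (and $0$ otherwise) and $t_{ijk}=0$ for $k\ne1$. The array $\overline{U}_T=(\overline{u}_{ijk})$ is indexed by all $(i,j,k)\in\mathbb{Z}^3$ such that $(i+a,j+b)$ is a box of $\lambda$ for some $a,b\in\{0,1\}$ and $0\le k\le\min(i,j)$, with $\overline{u}_{ijk}=\sum_{l=0}^{k}u_{ijl}$. Finally $\widetilde{U}_T=(\widetilde{u}_{ijk})$ has the same index set as $\overline{U}_T$ and $\widetilde{u}_{ijk}=\overline{u}_{ijk}-\mathrm{rect}_T(i,j)$. *)

theory Defs
  imports Main
begin

text \<open>A partition is a weakly decreasing list of positive integers (its parts).
  Boxes are in matrix coordinates (i,j), 1-based.\<close>

definition is_partition :: "nat list \<Rightarrow> bool" where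
  "is_partition lam \<longleftrightarrow> sorted_wrt (\<ge>) lam \<and> 0 \<notin> set lam"

definition in_shape :: "nat list \<Rightarrow> int \<Rightarrow> int \<Rightarrow> bool" where
  "in_shape lam i j \<longleftrightarrow> 1 \<le> i \<and> i \<le> int (length lam) \<and> 1 \<le> j \<and> j \<le> int (lam ! nat (i - 1))"

text \<open>An N-tableau of shape lam is given by a function T; only its values on boxes of lam
  are used. tent lam T i j is the entry t_ij for boxes and 0 otherwise (this is t_{ij1}).\<close>

definition tent :: "nat list \<Rightarrow> (int \<Rightarrow> int \<Rightarrow> nat) \<Rightarrow> int \<Rightarrow> int \<Rightarrow> int" where
  "tent lam T i j = (if in_shape lam i j then int (T i j) else 0)"

definition rect :: "nat list \<Rightarrow> (int \<Rightarrow> int \<Rightarrow> nat) \<Rightarrow> int \<Rightarrow> int \<Rightarrow> int" where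
  "rect lam T i j = (if in_shape lam i j
     then (\<Sum>k\<in>{1..i}. \<Sum>l\<in>{1..j}. tent lam T k l) else 0)"

text \<open>The array U_T, extended as a total function (its values on the index set of the paper
  are given by the defining recurrence; boundary values k = 0 and k = min(i,j)+1 are 0).\<close>

function uarr :: "nat list \<Rightarrow> (int \<Rightarrow> int \<Rightarrow> nat) \<Rightarrow> int \<Rightarrow> int \<Rightarrow> int \<Rightarrow> int" where
  "uarr lam T i j k =
     (if 0 < k \<and> k < min i j + 1 then
        min (uarr lam T (i - 1) j (k - 1)) (uarr lam T i (j - 1) (k - 1))
        + max (uarr lam T (i - 1) j k) (uarr lam T i (j - 1) k)
        - uarr lam T (i - 1) (j - 1) (k - 1)
        + (if k = 1 then tent lam T i j else 0)
      else 0)"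
  by pat_completeness auto
termination
  by (relation "measure (\<lambda>(lam, T, i, j, k). nat (i + j))") auto

definition ubar :: "nat list \<Rightarrow> (int \<Rightarrow> int \<Rightarrow> nat) \<Rightarrow> int \<Rightarrow> int \<Rightarrow> int \<Rightarrow> int" where
  "ubar lam T i j k = (\<Sum>l\<in>{0..k}. uarr lam T i j l)"

definition utilde :: "nat list \<Rightarrow> (int \<Rightarrow> int \<Rightarrow> nat) \<Rightarrow> int \<Rightarrow> int \<Rightarrow> int \<Rightarrow> int" where
  "utilde lam T i j k = ubar lam T i j k - rect lam T i j"

definition tilde_index :: "nat list \<Rightarrow> int \<Rightarrow> int \<Rightarrow> int \<Rightarrow> bool" where
  "tilde_index lam i j k \<longleftrightarrow>
     (\<exists>a\<in>{0,1}. \<exists>b\<in>{0,1}. in_shape lam (i + a) (j + b)) \<and> 0 \<le> k \<and> k \<le> min i j"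

end

theory Submission
  imports Defs
begin

declare uarr.simps[simp del]

definition Rf :: "nat list \<Rightarrow> (int \<Rightarrow> int \<Rightarrow> nat) \<Rightarrow> int \<Rightarrow> int \<Rightarrow> int" where
  "Rf lam T i j = (\<Sum>k\<in>{1..i}. \<Sum>l\<in>{1..j}. tent lam T k l)"

lemma uarr_out: "\<not> (0 < k \<and> k \<le> min i j) \<Longrightarrow> uarr lam T i j k = 0"
  by (subst uarr.simps) auto

lemma uarr_in: "0 < k \<Longrightarrow> k \<le> min i j \<Longrightarrow> uarr lam T i j k =
        min (uarr lam T (i - 1) j (k - 1)) (uarr lam T i (j - 1) (k - 1))
        + max (uarr lam T (i - 1) j k) (uarr lam T i (j - 1) k)
        - uarr lam T (i - 1) (j - 1) (k - 1)
        + (if k = 1 then tent lam T i j else 0)"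
  by (subst uarr.simps) auto

lemma uarr_0[simp]: "uarr lam T i j 0 = 0"
  by (rule uarr_out) auto

lemma tent_nonneg: "0 \<le> tent lam T i j"
  by (simp add: tent_def)

lemma ubar_0[simp]: "ubar lam T i j 0 = 0"
  by (simp add: ubar_def)

lemma ubar_neg: "k < 0 \<Longrightarrow> ubar lam T i j k = 0"
  by (simp add: ubar_def)

lemma ubar_step: "0 \<le> k \<Longrightarrow> ubar lam T i j (k + 1) = ubar lam T i j k + uarr lam T i j (k + 1)"
proof -
  assume "0 \<le> k"
  then have "{0..k+1} = insert (k+1) {0..k}"
    using atLeastAtMostPlus1_int_conv[of 0 k] by (simp add: add.commute)
  then show ?thesis by (simp add: ubar_def)
qed

lemma Rf_step:
  assumes "1 \<le> i" "1 \<le> j"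
  shows "Rf lam T i j = Rf lam T (i-1) j + Rf lam T i (j-1) - Rf lam T (i-1) (j-1) + tent lam T i j"
proof -
  have I: "{1..i} = insert i {1..i-1}" using assms atLeastAtMostPlus1_int_conv[of 1 "i-1"]
    by (simp add: add.commute)
  have J: "{1..j} = insert j {1..j-1}" using assms atLeastAtMostPlus1_int_conv[of 1 "j-1"]
    by (simp add: add.commute)
  show ?thesis unfolding Rf_def I J by (simp add: sum.distrib)
qed

lemma Rf_nonpos: "i \<le> 0 \<or> j \<le> 0 \<Longrightarrow> Rf lam T i j = 0"
  by (auto simp: Rf_def)


lemma uarr_zero_low: "i \<le> 0 \<or> j \<le> 0 \<Longrightarrow> uarr lam T i j k = 0"
  by (rule uarr_out) auto

lemma interlace:
  "\<forall>k. 0 \<le> uarr lam T i j k \<and> (1 \<le> k \<longrightarrow>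
      uarr lam T (i-1) j k \<le> uarr lam T i j k \<and> uarr lam T i j (k+1) \<le> uarr lam T (i-1) j k \<and>
      uarr lam T i (j-1) k \<le> uarr lam T i j k \<and> uarr lam T i j (k+1) \<le> uarr lam T i (j-1) k)"
proof (induction "nat (i+j)" arbitrary: i j rule: less_induct)
  case less
  show ?case
  proof (cases "i \<le> 0 \<or> j \<le> 0")
    case True
    then show ?thesis by (auto simp: uarr_zero_low)
  next
    case False
    then have ij: "1 \<le> i" "1 \<le> j" by auto
    have IH1: "\<forall>k. 0 \<le> uarr lam T (i-1) j k \<and> (1 \<le> k \<longrightarrow>
      uarr lam T (i-1) (j-1) k \<le> uarr lam T (i-1) j k \<and> uarr lam T (i-1) j (k+1) \<le> uarr lam T (i-1) (j-1) k)"
      using less[of "i-1" j] ij by auto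
    have IH2: "\<forall>k. 0 \<le> uarr lam T i (j-1) k \<and> (1 \<le> k \<longrightarrow>
      uarr lam T (i-1) (j-1) k \<le> uarr lam T i (j-1) k \<and> uarr lam T i (j-1) (k+1) \<le> uarr lam T (i-1) (j-1) k)"
      using less[of i "j-1"] ij by auto
    define mu where "mu = uarr lam T (i-1) j"
    define nu where "nu = uarr lam T i (j-1)"
    define la where "la = uarr lam T (i-1) (j-1)"
    define rho where "rho = uarr lam T i j"
    define m where "m = min i j"
    have mu0: "\<And>k. 0 \<le> mu k" and nu0: "\<And>k. 0 \<le> nu k" using IH1 IH2 mu_def nu_def by auto
    have lm: "\<And>k. 1 \<le> k \<Longrightarrow> la k \<le> mu k \<and> mu (k+1) \<le> la k" using IH1 mu_def la_def by auto
    have ln: "\<And>k. 1 \<le> k \<Longrightarrow> la k \<le> nu k \<and> nu (k+1) \<le> la k" using IH2 nu_def la_def by auto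
    have mubig: "\<And>k. k > m \<Longrightarrow> mu k = 0" unfolding mu_def m_def by (rule uarr_out) auto
    have nubig: "\<And>k. k > m \<Longrightarrow> nu k = 0" unfolding nu_def m_def by (rule uarr_out) auto
    have rhoout: "\<And>k. \<not> (0 < k \<and> k \<le> m) \<Longrightarrow> rho k = 0" unfolding rho_def m_def by (rule uarr_out) auto
    have rhoin: "\<And>k. 0 < k \<Longrightarrow> k \<le> m \<Longrightarrow> rho k = min (mu (k-1)) (nu (k-1)) + max (mu k) (nu k)
        - la (k-1) + (if k = 1 then tent lam T i j else 0)"
      unfolding rho_def mu_def nu_def la_def m_def by (rule uarr_in) auto
    have z: "mu 0 = 0" "nu 0 = 0" "la 0 = 0" by (auto simp: mu_def nu_def la_def)
    have t0: "0 \<le> tent lam T i j" by (rule tent_nonneg)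
    have A: "mu k \<le> rho k \<and> nu k \<le> rho k" if "1 \<le> k" for k
    proof (cases "k \<le> m")
      case True
      show ?thesis
      proof (cases "k = 1")
        case True
        then show ?thesis using rhoin[of k] \<open>k \<le> m\<close> z t0 by auto
      next
        case False
        then have "la (k-1) \<le> mu (k-1)" "la (k-1) \<le> nu (k-1)" using lm[of "k-1"] ln[of "k-1"] that by auto
        then show ?thesis using rhoin[of k] \<open>k \<le> m\<close> that False by auto
      qed
    next
      case False
      then show ?thesis using mubig[of k] nubig[of k] rhoout[of k] by auto
    qed
    have B: "rho (k+1) \<le> mu k \<and> rho (k+1) \<le> nu k" if "1 \<le> k" for k
    proof (cases "k + 1 \<le> m")
      case True
      have "mu (k+1) \<le> la k" "nu (k+1) \<le> la k" using lm[of k] ln[of k] that by auto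
      then show ?thesis using rhoin[of "k+1"] True that by auto
    next
      case False
      then show ?thesis using rhoout[of "k+1"] mu0 nu0 by auto
    qed
    have C: "0 \<le> rho k" for k
    proof (cases "0 < k \<and> k \<le> m")
      case True
      then show ?thesis using A[of k] mu0[of k] by auto
    next
      case False
      then show ?thesis using rhoout by auto
    qed
    show ?thesis using A B C unfolding rho_def mu_def nu_def by auto
  qed
qed

lemma uarr_nonneg: "0 \<le> uarr lam T i j k"
  using interlace by blast


lemma tele_nat:
  "int n + 1 \<le> min i j \<Longrightarrow> ubar lam T i j (int n + 1) =
     ubar lam T (i-1) j (int n) + ubar lam T i (j-1) (int n)
     + max (uarr lam T (i-1) j (int n + 1)) (uarr lam T i (j-1) (int n + 1))
     - ubar lam T (i-1) (j-1) (int n) + tent lam T i j"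
proof (induction n)
  case 0
  have "ubar lam T i j 1 = uarr lam T i j 1"
    using ubar_step[of 0 lam T i j] by simp
  also have "\<dots> = max (uarr lam T (i-1) j 1) (uarr lam T i (j-1) 1) + tent lam T i j"
    using 0 by (subst uarr_in) auto
  finally show ?case by simp
next
  case (Suc n)
  let ?k = "int n + 1"
  have e: "int (Suc n) = ?k" by simp
  have IH: "ubar lam T i j ?k = ubar lam T (i-1) j (int n) + ubar lam T i (j-1) (int n)
     + max (uarr lam T (i-1) j ?k) (uarr lam T i (j-1) ?k)
     - ubar lam T (i-1) (j-1) (int n) + tent lam T i j" using Suc by auto
  have u: "uarr lam T i j (?k + 1) = min (uarr lam T (i-1) j ?k) (uarr lam T i (j-1) ?k)
     + max (uarr lam T (i-1) j (?k+1)) (uarr lam T i (j-1) (?k+1)) - uarr lam T (i-1) (j-1) ?k"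
    using Suc.prems by (subst uarr_in) (auto simp: add.commute)
  have s1: "ubar lam T i j (?k+1) = ubar lam T i j ?k + uarr lam T i j (?k+1)"
    by (rule ubar_step) auto
  have s2: "ubar lam T (i-1) j ?k = ubar lam T (i-1) j (int n) + uarr lam T (i-1) j ?k"
    by (rule ubar_step) auto
  have s3: "ubar lam T i (j-1) ?k = ubar lam T i (j-1) (int n) + uarr lam T i (j-1) ?k"
    by (rule ubar_step) auto
  have s4: "ubar lam T (i-1) (j-1) ?k = ubar lam T (i-1) (j-1) (int n) + uarr lam T (i-1) (j-1) ?k"
    by (rule ubar_step) auto
  have mm: "min x y + max x y = x + y" for x y :: int by (simp add: min_def max_def)
  show ?case unfolding e s1 IH u using s2 s3 s4 mm[of "uarr lam T (i-1) j ?k" "uarr lam T i (j-1) ?k"]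
    by linarith
qed

lemma tele:
  assumes "1 \<le> k" "k \<le> min i j"
  shows "ubar lam T i j k =
     ubar lam T (i-1) j (k-1) + ubar lam T i (j-1) (k-1)
     + max (uarr lam T (i-1) j k) (uarr lam T i (j-1) k)
     - ubar lam T (i-1) (j-1) (k-1) + tent lam T i j"
proof -
  define n where "n = nat (k - 1)"
  have n: "k = int n + 1" using assms(1) n_def by simp
  show ?thesis using tele_nat[of n i j lam T] assms n by simp
qed

lemma ubar_ext:
  assumes "0 \<le> min i j" "min i j \<le> k"
  shows "ubar lam T i j k = ubar lam T i j (min i j)"
  unfolding ubar_def
  by (rule sum.mono_neutral_right) (use assms in \<open>auto intro!: uarr_out\<close>)

lemma full: "min i j \<le> k \<Longrightarrow> ubar lam T i j k = Rf lam T i j"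
proof (induction "nat (i+j)" arbitrary: i j k rule: less_induct)
  case less
  show ?case
  proof (cases "i \<le> 0 \<or> j \<le> 0")
    case True
    then show ?thesis by (simp add: ubar_def uarr_zero_low Rf_nonpos)
  next
    case False
    then have ij: "1 \<le> i" "1 \<le> j" by auto
    define m where "m = min i j"
    have m1: "1 \<le> m" using ij m_def by auto
    have "ubar lam T i j k = ubar lam T i j m"
      unfolding m_def by (rule ubar_ext) (use less.prems m1 m_def in auto)
    also have "\<dots> = ubar lam T (i-1) j (m-1) + ubar lam T i (j-1) (m-1)
     + max (uarr lam T (i-1) j m) (uarr lam T i (j-1) m)
     - ubar lam T (i-1) (j-1) (m-1) + tent lam T i j" using tele[of m i j] m1 m_def by auto
    also have "\<dots> = Rf lam T (i-1) j + Rf lam T i (j-1) - Rf lam T (i-1) (j-1) + tent lam T i j"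
    proof -
      have C: "ubar lam T (i-1) (j-1) (m-1) = Rf lam T (i-1) (j-1)"
        using less.hyps[of "i-1" "j-1" "m-1"] ij m_def by (auto simp: min_def)
      have st1: "ubar lam T (i-1) j m = ubar lam T (i-1) j (m-1) + uarr lam T (i-1) j m"
        using ubar_step[of "m-1" lam T "i-1" j] m1 by simp
      have st2: "ubar lam T i (j-1) m = ubar lam T i (j-1) (m-1) + uarr lam T i (j-1) m"
        using ubar_step[of "m-1" lam T i "j-1"] m1 by simp
      show ?thesis
      proof (cases "i \<le> j")
        case True
        have a0: "uarr lam T (i-1) j m = 0" using True m_def by (intro uarr_out) auto
        have A: "ubar lam T (i-1) j (m-1) = Rf lam T (i-1) j"
          using less.hyps[of "i-1" j "m-1"] ij m_def True by (auto simp: min_def)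
        have B: "ubar lam T i (j-1) m = Rf lam T i (j-1)"
          using less.hyps[of i "j-1" m] ij m_def True by (auto simp: min_def)
        show ?thesis using a0 A B C st2 uarr_nonneg[of lam T i "j-1" m] by auto
      next
        case False
        have a0: "uarr lam T i (j-1) m = 0" using False m_def by (intro uarr_out) auto
        have A: "ubar lam T i (j-1) (m-1) = Rf lam T i (j-1)"
          using less.hyps[of i "j-1" "m-1"] ij m_def False by (auto simp: min_def)
        have B: "ubar lam T (i-1) j m = Rf lam T (i-1) j"
          using less.hyps[of "i-1" j m] ij m_def False by (auto simp: min_def)
        show ?thesis using a0 A B C st1 uarr_nonneg[of lam T "i-1" j m] by auto
      qed
    qed
    also have "\<dots> = Rf lam T i j" using Rf_step[OF ij] by simp
    finally show ?thesis .
  qed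
qed


lemma shape_mono:
  assumes "is_partition lam" "in_shape lam i' j'" "1 \<le> i" "i \<le> i'" "1 \<le> j" "j \<le> j'"
  shows "in_shape lam i j"
proof -
  have s: "sorted_wrt (\<ge>) lam" using assms(1) by (simp add: is_partition_def)
  have l: "i' \<le> int (length lam)" "j' \<le> int (lam ! nat (i' - 1))" using assms(2) by (auto simp: in_shape_def)
  have "lam ! nat (i' - 1) \<le> lam ! nat (i - 1)"
  proof (cases "i = i'")
    case True then show ?thesis by simp
  next
    case False
    then have "nat (i - 1) < nat (i' - 1)" "nat (i' - 1) < length lam" using assms l by auto
    then show ?thesis using sorted_wrt_nth_less[OF s] by blast
  qed
  then show ?thesis using assms l unfolding in_shape_def by auto
qed

lemma rect_Rf: "in_shape lam i j \<or> i \<le> 0 \<or> j \<le> 0 \<Longrightarrow> rect lam T i j = Rf lam T i j"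
  by (auto simp: rect_def Rf_def in_shape_def)

theorem proposition4p3:
  fixes lam :: "nat list" and T :: "int \<Rightarrow> int \<Rightarrow> nat" and i j k :: int
  assumes "is_partition lam"
    and "tilde_index lam i j k"
  shows "(k = 0 \<longrightarrow> utilde lam T i j 0 = - rect lam T i j)
       \<and> (k = min i j \<longrightarrow> utilde lam T i j (min i j) = 0)
       \<and> (0 < k \<and> k < min i j \<longrightarrow>
            utilde lam T i j k =
              max (utilde lam T (i - 1) j k + utilde lam T i (j - 1) (k - 1))
                  (utilde lam T (i - 1) j (k - 1) + utilde lam T i (j - 1) k)
              - utilde lam T (i - 1) (j - 1) (k - 1))"
proof -
  obtain a b where ab: "a \<in> {0,1}" "b \<in> {0,1}" "in_shape lam (i + a) (j + b)"
    and k: "0 \<le> k" "k \<le> min i j"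
    using assms(2) unfolding tilde_index_def by blast
  have sh: "in_shape lam i' j'" if "1 \<le> i'" "i' \<le> i" "1 \<le> j'" "j' \<le> j" for i' j'
    using shape_mono[OF assms(1) ab(3)] that ab(1,2) by auto
  have rr: "rect lam T i' j' = Rf lam T i' j'" if "i' \<le> i" "j' \<le> j" for i' j'
  proof (cases "i' \<le> 0 \<or> j' \<le> 0")
    case True then show ?thesis by (intro rect_Rf) auto
  next
    case False then show ?thesis using sh[of i' j'] that by (intro rect_Rf) auto
  qed
  have P1: "utilde lam T i j 0 = - rect lam T i j" by (simp add: utilde_def)
  have P2: "utilde lam T i j (min i j) = 0"
    using full[of i j "min i j" lam T] rr[of i j] by (simp add: utilde_def)
  have P3: "utilde lam T i j k =
              max (utilde lam T (i - 1) j k + utilde lam T i (j - 1) (k - 1))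
                  (utilde lam T (i - 1) j (k - 1) + utilde lam T i (j - 1) k)
              - utilde lam T (i - 1) (j - 1) (k - 1)" if kk: "0 < k" "k < min i j"
  proof -
    have ij: "1 \<le> i" "1 \<le> j" using kk by auto
    have te: "ubar lam T i j k =
     ubar lam T (i-1) j (k-1) + ubar lam T i (j-1) (k-1)
     + max (uarr lam T (i-1) j k) (uarr lam T i (j-1) k)
     - ubar lam T (i-1) (j-1) (k-1) + tent lam T i j" using tele[of k i j lam T] kk by auto
    have s1: "ubar lam T (i-1) j k = ubar lam T (i-1) j (k-1) + uarr lam T (i-1) j k"
      using ubar_step[of "k-1" lam T "i-1" j] kk by simp
    have s2: "ubar lam T i (j-1) k = ubar lam T i (j-1) (k-1) + uarr lam T i (j-1) k"
      using ubar_step[of "k-1" lam T i "j-1"] kk by simp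
    have R: "Rf lam T i j = Rf lam T (i-1) j + Rf lam T i (j-1) - Rf lam T (i-1) (j-1) + tent lam T i j"
      by (rule Rf_step[OF ij])
    have r1: "rect lam T i j = Rf lam T i j" "rect lam T (i-1) j = Rf lam T (i-1) j"
      "rect lam T i (j-1) = Rf lam T i (j-1)" "rect lam T (i-1) (j-1) = Rf lam T (i-1) (j-1)"
      using rr by auto
    have mx: "max (x + c) (y + c) = max x y + c" for x y c :: int by (simp add: max_def)
    show ?thesis unfolding utilde_def r1 te s1 s2 R
      using mx[of "uarr lam T (i-1) j k" "uarr lam T i (j-1) k"
          "ubar lam T (i-1) j (k-1) + ubar lam T i (j-1) (k-1) - Rf lam T (i-1) j - Rf lam T i (j-1)"]
      by (simp add: algebra_simps)
  qed
  show ?thesis using P1 P2 P3 by blast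
qed

end
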